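(* Let $\rho=(\rho_1,\dots,\rho_s)$ be a composition of $n$ with exactly $r$ nonzero entries. Then: (a) There are exactly $r$ boxes of $\rho$ which can contain $n$ in a row-strict filling of $\rho$ (namely, the far-right boxes of the nonzero rows, each of which does occur). (b) If $T$ is a row-strict filling of $\rho$ and $n$ lies in the far-right box whose dimension-order label is $i\in\{1,\dots,r\}$, then $|D^T_n|=i-1$.
   Context: A composition $\rho=(\rho_1,\dots,\rho_s)$ of $n$ is a finite sequence of nonnegative integers summing to $n$; its diagram has $\rho_i$ boxes in row $i$ (rows numbered top to bottom) in columns $1,\dots,\rho_i$ (columns numbered left to right). A filling places $1,\dots,n$ bijectively into the boxes; it is row-strict if entries increase left to right in each row. Dimension-ordering: the far-right box of each nonzero row $i$ (the box in column $\rho_i$) gets a label in $\{1,\dots,r\}$ by ordering these $r$ boxes first by column, from the rightmost column to the leftmost, and within a single column from top to bottom; the $k$-th box in this order gets label $k$. Dimension pairs (with Hessenberg function $h(j)=j$): for a filling $T$, a pair $(a,b)$ of entries is a dimension pair if (1) $b>a$; (2) either $b$ lies in the same column as $a$ strictly below it, or $b$ lies in a column strictly to the left of the column of $a$; (3) if there is a box immediately to the right of $a$ in its row, containing $c$, then $b\le c$. For $j\in\{2,\dots,n\}$, $D^T_j$ denotes the set of dimension pairs of $T$ of the form $(a,j)$. *)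

theory Defs
  imports Main
begin

text \<open>A composition is a list of naturals; rows and columns are numbered from 1.
  A box is a pair (row, column).\<close>

definition boxes :: "nat list \<Rightarrow> (nat \<times> nat) set" where
  "boxes \<rho> = {(i, j). 1 \<le> i \<and> i \<le> length \<rho> \<and> 1 \<le> j \<and> j \<le> \<rho> ! (i - 1)}"

definition row_strict_filling :: "nat list \<Rightarrow> (nat \<times> nat \<Rightarrow> nat) \<Rightarrow> bool" where
  "row_strict_filling \<rho> T \<longleftrightarrow>
     bij_betw T (boxes \<rho>) {1..sum_list \<rho>} \<and>
     (\<forall>i j j'. (i, j) \<in> boxes \<rho> \<longrightarrow> (i, j') \<in> boxes \<rho> \<longrightarrow> j < j' \<longrightarrow> T (i, j) < T (i, j'))"

definition far_right :: "nat list \<Rightarrow> (nat \<times> nat) set" where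
  "far_right \<rho> = {(i, \<rho> ! (i - 1)) | i. 1 \<le> i \<and> i \<le> length \<rho> \<and> \<rho> ! (i - 1) \<noteq> 0}"

text \<open>Dimension-ordering label: order by column from right to left, within a column
  from top to bottom; the k-th box gets label k.\<close>
definition dim_label :: "nat list \<Rightarrow> nat \<times> nat \<Rightarrow> nat" where
  "dim_label \<rho> p = 1 + card {q \<in> far_right \<rho>. snd q > snd p \<or> (snd q = snd p \<and> fst q < fst p)}"

text \<open>Dimension pair (a, b) of filling T (Hessenberg function h(j) = j), given
  by the boxes p (containing a) and q (containing b).\<close>
definition dim_pair_boxes :: "nat list \<Rightarrow> (nat \<times> nat \<Rightarrow> nat) \<Rightarrow> nat \<times> nat \<Rightarrow> nat \<times> nat \<Rightarrow> bool" where
  "dim_pair_boxes \<rho> T p q \<longleftrightarrow>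
     p \<in> boxes \<rho> \<and> q \<in> boxes \<rho> \<and> T q > T p \<and>
     ((snd q = snd p \<and> fst q > fst p) \<or> snd q < snd p) \<and>
     ((fst p, snd p + 1) \<in> boxes \<rho> \<longrightarrow> T q \<le> T (fst p, snd p + 1))"

definition dim_pair :: "nat list \<Rightarrow> (nat \<times> nat \<Rightarrow> nat) \<Rightarrow> nat \<Rightarrow> nat \<Rightarrow> bool" where
  "dim_pair \<rho> T a b \<longleftrightarrow> (\<exists>p q. T p = a \<and> T q = b \<and> dim_pair_boxes \<rho> T p q)"

definition D :: "nat list \<Rightarrow> (nat \<times> nat \<Rightarrow> nat) \<Rightarrow> nat \<Rightarrow> (nat \<times> nat) set" where
  "D \<rho> T j = {(a, j) | a. dim_pair \<rho> T a j}"

end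

theory Submission imports Defs begin

definition T0 :: "nat list \<Rightarrow> nat \<times> nat \<Rightarrow> nat" where
  "T0 \<rho> p = sum_list (take (fst p - 1) \<rho>) + snd p"

lemma take_mono_sum: "i \<le> k \<Longrightarrow> sum_list (take i (\<rho>::nat list)) \<le> sum_list (take k \<rho>)"
proof -
  assume "i \<le> k"
  then have "take i \<rho> = take i (take k \<rho>)" by (simp add: min_def)
  then show ?thesis by (metis sum_list_append append_take_drop_id le_add1)
qed

lemma take_Suc_sum: "1 \<le> i \<Longrightarrow> i \<le> length \<rho> \<Longrightarrow> sum_list (take i (\<rho>::nat list)) = sum_list (take (i-1) \<rho>) + \<rho> ! (i-1)"
  by (cases i) (simp_all add: take_Suc_conv_app_nth)

lemma T0_inj: "inj_on (T0 \<rho>) (boxes \<rho>)"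
proof (rule inj_onI)
  fix p q assume p: "p \<in> boxes \<rho>" and q: "q \<in> boxes \<rho>" and e: "T0 \<rho> p = T0 \<rho> q"
  obtain i j where pij: "p = (i,j)" by force
  obtain i' j' where qij: "q = (i',j')" by force
  have lt: "T0 \<rho> (i,j) < T0 \<rho> (i',j')" if "(i,j) \<in> boxes \<rho>" "(i',j') \<in> boxes \<rho>" "i < i'" for i j i' j'
  proof -
    have "T0 \<rho> (i,j) \<le> sum_list (take (i-1) \<rho>) + \<rho> ! (i-1)" using that by (simp add: T0_def boxes_def)
    also have "\<dots> = sum_list (take i \<rho>)" using that take_Suc_sum[of i \<rho>] by (simp add: boxes_def)
    also have "\<dots> \<le> sum_list (take (i'-1) \<rho>)" using that by (intro take_mono_sum) auto
    also have "\<dots> < T0 \<rho> (i',j')" using that by (simp add: T0_def boxes_def)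
    finally show ?thesis .
  qed
  show "p = q"
  proof (cases "i = i'")
    case True then show ?thesis using e pij qij by (simp add: T0_def)
  next
    case False
    then have "i < i' \<or> i' < i" by arith
    then show ?thesis using lt[of i j i' j'] lt[of i' j' i j] p q e pij qij by auto
  qed
qed

lemma T0_surj: "{1..sum_list \<rho>} \<subseteq> T0 \<rho> ` boxes \<rho>"
proof
  fix v assume v: "v \<in> {1..sum_list \<rho>}"
  define i where "i = (LEAST i. v \<le> sum_list (take i \<rho>))"
  have ex: "v \<le> sum_list (take (length \<rho>) \<rho>)" using v by simp
  have i1: "v \<le> sum_list (take i \<rho>)" unfolding i_def by (rule LeastI[of "\<lambda>i. v \<le> sum_list (take i \<rho>)", OF ex])
  have il: "i \<le> length \<rho>" unfolding i_def by (rule Least_le[of "\<lambda>i. v \<le> sum_list (take i \<rho>)", OF ex])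
  have i0: "i \<noteq> 0" using i1 v by (cases i) auto
  have i2: "\<not> v \<le> sum_list (take (i-1) \<rho>)"
    using not_less_Least[of "i-1" "\<lambda>i. v \<le> sum_list (take i \<rho>)"] i0 unfolding i_def by auto
  have s: "sum_list (take i \<rho>) = sum_list (take (i-1) \<rho>) + \<rho> ! (i-1)"
    using take_Suc_sum[of i \<rho>] i0 il by simp
  define j where "j = v - sum_list (take (i-1) \<rho>)"
  have "(i,j) \<in> boxes \<rho>" using i0 il i1 i2 s by (auto simp: boxes_def j_def)
  moreover have "T0 \<rho> (i,j) = v" using i2 by (simp add: T0_def j_def)
  ultimately show "v \<in> T0 \<rho> ` boxes \<rho>" by force
qed

lemma T0_range: "p \<in> boxes \<rho> \<Longrightarrow> T0 \<rho> p \<in> {1..sum_list \<rho>}"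
proof -
  assume p: "p \<in> boxes \<rho>"
  obtain i j where pij: "p = (i,j)" by force
  have "T0 \<rho> (i,j) \<le> sum_list (take (i-1) \<rho>) + \<rho> ! (i-1)" using p pij by (simp add: T0_def boxes_def)
  also have "\<dots> = sum_list (take i \<rho>)" using p pij take_Suc_sum[of i \<rho>] by (simp add: boxes_def)
  also have "\<dots> \<le> sum_list (take (length \<rho>) \<rho>)" using p pij by (intro take_mono_sum) (auto simp: boxes_def)
  finally show ?thesis using p pij by (auto simp: T0_def boxes_def)
qed

lemma T0_bij: "bij_betw (T0 \<rho>) (boxes \<rho>) {1..sum_list \<rho>}"
  using T0_inj T0_surj T0_range unfolding bij_betw_def by blast

lemma T0_rs: "row_strict_filling \<rho> (T0 \<rho>)"
  using T0_bij by (auto simp: row_strict_filling_def T0_def)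

definition sh :: "nat \<Rightarrow> nat \<Rightarrow> nat \<Rightarrow> nat" where
  "sh n m v = (if v = m then n else if v > m then v - 1 else v)"

lemma sh_bij: "m \<in> {1..n} \<Longrightarrow> bij_betw (sh n m) {1..n} {1..n}"
  apply (rule bij_betw_byWitness[where f'="\<lambda>w. if w = n then m else if w \<ge> m then w + 1 else w"])
  unfolding sh_def image_subset_iff by (auto simp del: One_nat_def)

lemma exists_filling:
  assumes p: "p \<in> far_right \<rho>"
  shows "\<exists>T. row_strict_filling \<rho> T \<and> T p = sum_list \<rho>"
proof -
  let ?n = "sum_list \<rho>"
  obtain i where i: "p = (i, \<rho> ! (i-1))" "1 \<le> i" "i \<le> length \<rho>" "\<rho> ! (i-1) \<noteq> 0"
    using p by (auto simp: far_right_def)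
  have pb: "p \<in> boxes \<rho>" using i by (auto simp: boxes_def)
  define m where "m = T0 \<rho> p"
  have m: "m \<in> {1..?n}" using T0_range[OF pb] by (simp add: m_def)
  define T where "T = sh ?n m \<circ> T0 \<rho>"
  have bij: "bij_betw T (boxes \<rho>) {1..?n}" unfolding T_def
    by (rule bij_betw_trans[OF T0_bij sh_bij[OF m]])
  have rs: "T (a, j) < T (a, j')" if a: "(a,j) \<in> boxes \<rho>" "(a,j') \<in> boxes \<rho>" "j < j'" for a j j'
  proof -
    have lt: "T0 \<rho> (a,j) < T0 \<rho> (a,j')" using a by (simp add: T0_def)
    have r: "T0 \<rho> (a,j') \<le> ?n" using T0_range[OF a(2)] by simp
    have ne: "T0 \<rho> (a,j) \<noteq> m"
    proof
      assume "T0 \<rho> (a,j) = m"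
      then have "(a,j) = p" using inj_onD[OF T0_inj _ a(1) pb] m_def by simp
      then show False using a i by (auto simp: boxes_def)
    qed
    show ?thesis using lt r ne unfolding T_def by (auto simp: sh_def)
  qed
  have "T p = ?n" by (simp add: T_def sh_def m_def)
  then show ?thesis using bij rs by (auto simp: row_strict_filling_def)
qed

lemma far_right_img: "far_right \<rho> = (\<lambda>i. (i, \<rho> ! (i-1))) ` {i \<in> {1..length \<rho>}. \<rho> ! (i-1) \<noteq> 0}"
  by (auto simp: far_right_def)

lemma finite_far_right: "finite (far_right \<rho>)"
  by (simp add: far_right_img)

lemma card_far_right: "card (far_right \<rho>) = length (filter (\<lambda>x. x \<noteq> 0) \<rho>)"
proof -
  have "card (far_right \<rho>) = card {i \<in> {1..length \<rho>}. \<rho> ! (i-1) \<noteq> 0}"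
    unfolding far_right_img by (rule card_image) (auto simp: inj_on_def)
  also have "{i \<in> {1..length \<rho>}. \<rho> ! (i-1) \<noteq> 0} = Suc ` {i. i < length \<rho> \<and> \<rho> ! i \<noteq> 0}"
  proof (intro equalityI subsetI)
    fix x assume "x \<in> {i \<in> {1..length \<rho>}. \<rho> ! (i-1) \<noteq> 0}"
    then show "x \<in> Suc ` {i. i < length \<rho> \<and> \<rho> ! i \<noteq> 0}"
      by (intro image_eqI[of x Suc "x-1"]) auto
  qed auto
  also have "card \<dots> = card {i. i < length \<rho> \<and> \<rho> ! i \<noteq> 0}" by (rule card_image) auto
  finally show ?thesis by (simp add: length_filter_conv_card)
qed

lemma far_right_sub: "far_right \<rho> \<subseteq> boxes \<rho>"
  by (auto simp: far_right_def boxes_def)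

lemma D_eq:
  assumes rs: "row_strict_filling \<rho> T" and p: "p \<in> far_right \<rho>" and Tp: "T p = sum_list \<rho>"
  shows "D \<rho> T (sum_list \<rho>) = (\<lambda>q. (T q, sum_list \<rho>)) ` {q \<in> far_right \<rho>. snd q > snd p \<or> (snd q = snd p \<and> fst q < fst p)}"
proof -
  let ?n = "sum_list \<rho>"
  have bij: "bij_betw T (boxes \<rho>) {1..?n}" using rs by (simp add: row_strict_filling_def)
  have inj: "inj_on T (boxes \<rho>)" using bij by (simp add: bij_betw_def)
  have rng: "x \<in> boxes \<rho> \<Longrightarrow> T x \<le> ?n" for x using bij by (auto simp: bij_betw_def)
  have pb: "p \<in> boxes \<rho>" using p far_right_sub by blast
  obtain i0 where i0: "p = (i0, \<rho> ! (i0-1))" "1 \<le> i0" "i0 \<le> length \<rho>" using p by (auto simp: far_right_def)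
  show ?thesis
  proof (intro equalityI subsetI)
    fix x assume "x \<in> D \<rho> T ?n"
    then obtain p' q where x: "x = (T p', ?n)" "T q = ?n" and dp: "dim_pair_boxes \<rho> T p' q"
      by (auto simp: D_def dim_pair_def)
    have qb: "q \<in> boxes \<rho>" and pb': "p' \<in> boxes \<rho>" using dp by (auto simp: dim_pair_boxes_def)
    have "q = p" using inj_onD[OF inj _ qb pb] x Tp by simp
    then have col: "(snd p = snd p' \<and> fst p > fst p') \<or> snd p < snd p'"
      and right: "(fst p', snd p' + 1) \<in> boxes \<rho> \<longrightarrow> ?n \<le> T (fst p', snd p' + 1)"
      using dp x by (auto simp: dim_pair_boxes_def)
    have nr: "(fst p', snd p' + 1) \<notin> boxes \<rho>"
    proof
      assume rb: "(fst p', snd p' + 1) \<in> boxes \<rho>"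
      then have "T (fst p', snd p' + 1) = T p" using right rng[OF rb] Tp by simp
      then have "(fst p', snd p' + 1) = p" using inj_onD[OF inj _ rb pb] by simp
      then show False using col by auto
    qed
    have "p' \<in> far_right \<rho>" using pb' nr
      by (cases p') (auto simp: boxes_def far_right_def)
    then show "x \<in> (\<lambda>q. (T q, ?n)) ` {q \<in> far_right \<rho>. snd q > snd p \<or> (snd q = snd p \<and> fst q < fst p)}"
      using x col by auto
  next
    fix x assume "x \<in> (\<lambda>q. (T q, ?n)) ` {q \<in> far_right \<rho>. snd q > snd p \<or> (snd q = snd p \<and> fst q < fst p)}"
    then obtain p' where x: "x = (T p', ?n)" and p': "p' \<in> far_right \<rho>"
      and col: "snd p' > snd p \<or> (snd p' = snd p \<and> fst p' < fst p)" by auto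
    have pb': "p' \<in> boxes \<rho>" using p' far_right_sub by blast
    have "p' \<noteq> p" using col by auto
    then have "T p' \<noteq> T p" using inj_onD[OF inj _ pb' pb] by auto
    then have lt: "T p' < ?n" using rng[OF pb'] Tp by simp
    have nr: "(fst p', snd p' + 1) \<notin> boxes \<rho>" using p' by (auto simp: far_right_def boxes_def)
    have "dim_pair_boxes \<rho> T p' p" using pb' pb lt Tp col nr by (auto simp: dim_pair_boxes_def)
    then have "dim_pair \<rho> T (T p') ?n" using Tp unfolding dim_pair_def by blast
    then show "x \<in> D \<rho> T ?n" using x by (auto simp: D_def)
  qed
qed

theorem mainTheorem2:
  fixes \<rho> :: "nat list" and n r :: nat
  assumes "sum_list \<rho> = n"
    and "r = length (filter (\<lambda>x. x \<noteq> 0) \<rho>)"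
  shows "{p \<in> boxes \<rho>. \<exists>T. row_strict_filling \<rho> T \<and> T p = n} = far_right \<rho>
       \<and> card (far_right \<rho>) = r
       \<and> (\<forall>T p. row_strict_filling \<rho> T \<and> p \<in> far_right \<rho> \<and> T p = n
              \<longrightarrow> dim_label \<rho> p \<in> {1..r} \<and> card (D \<rho> T n) = dim_label \<rho> p - 1)"
proof (intro conjI allI impI)
  show "{p \<in> boxes \<rho>. \<exists>T. row_strict_filling \<rho> T \<and> T p = n} = far_right \<rho>"
  proof (intro equalityI subsetI)
    fix p assume "p \<in> {p \<in> boxes \<rho>. \<exists>T. row_strict_filling \<rho> T \<and> T p = n}"
    then obtain T where pb: "p \<in> boxes \<rho>" and rs: "row_strict_filling \<rho> T" and Tp: "T p = n" by auto
    have bij: "bij_betw T (boxes \<rho>) {1..n}" using rs assms(1) by (simp add: row_strict_filling_def)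
    have nr: "(fst p, snd p + 1) \<notin> boxes \<rho>"
    proof
      assume rb: "(fst p, snd p + 1) \<in> boxes \<rho>"
      have "(fst p, snd p) \<in> boxes \<rho>" using pb by simp
      then have "T (fst p, snd p) < T (fst p, snd p + 1)" using rs rb unfolding row_strict_filling_def by (meson less_add_one)
      moreover have "T (fst p, snd p + 1) \<le> n" using bij rb by (auto simp: bij_betw_def)
      ultimately show False using Tp by simp
    qed
    then show "p \<in> far_right \<rho>" using pb by (cases p) (auto simp: boxes_def far_right_def)
  next
    fix p assume p: "p \<in> far_right \<rho>"
    then show "p \<in> {p \<in> boxes \<rho>. \<exists>T. row_strict_filling \<rho> T \<and> T p = n}"
      using exists_filling[OF p] far_right_sub assms(1) by blast
  qed
next
  show "card (far_right \<rho>) = r" using card_far_right assms(2) by simp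
next
  fix T p assume h: "row_strict_filling \<rho> T \<and> p \<in> far_right \<rho> \<and> T p = n"
  let ?S = "{q \<in> far_right \<rho>. snd q > snd p \<or> (snd q = snd p \<and> fst q < fst p)}"
  have sub: "?S \<subseteq> far_right \<rho> - {p}" by auto
  have "card ?S \<le> card (far_right \<rho> - {p})" by (rule card_mono[OF _ sub]) (simp add: finite_far_right)
  also have "\<dots> = r - 1" using h finite_far_right card_far_right assms(2) by simp
  finally have cS: "card ?S \<le> r - 1" .
  have "r \<ge> 1" using h finite_far_right card_far_right assms(2)
    by (metis One_nat_def Suc_leI card_gt_0_iff empty_iff)
  then show "dim_label \<rho> p \<in> {1..r}" using cS by (simp add: dim_label_def)
  have inj: "inj_on T (boxes \<rho>)" using h by (simp add: row_strict_filling_def bij_betw_def)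
  have "card (D \<rho> T n) = card ((\<lambda>q. (T q, n)) ` ?S)" using D_eq[of \<rho> T p] h assms(1) by simp
  also have "\<dots> = card ?S"
    by (rule card_image) (use inj far_right_sub in \<open>auto simp: inj_on_def\<close>)
  finally show "card (D \<rho> T n) = dim_label \<rho> p - 1" by (simp add: dim_label_def)
qed

end
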